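(* Let $\Omega$ be a semigroup and let $(D, \{ \prec_\alpha, \succ_\alpha, \curlyvee_{\alpha, \beta} \}_{\alpha, \beta \in \Omega})$ be an NS-family algebra over a field $\mathbf{k}$. Define bilinear operations on $D \otimes \mathbf{k}\Omega$ by $$(x \otimes \alpha) \prec (y \otimes \beta) := (x \prec_\beta y ) \otimes \alpha \beta, \quad (x \otimes \alpha) \succ (y \otimes \beta) := (x \succ_\alpha y) \otimes \alpha \beta, \quad (x \otimes \alpha) \curlyvee (y \otimes \beta) := (x \curlyvee_{\alpha, \beta} y) \otimes \alpha \beta,$$ for $x,y\in D$, $\alpha,\beta\in\Omega$ (extended bilinearly). Then $(D \otimes \mathbf{k}\Omega, \prec, \succ, \curlyvee)$ is an NS-algebra. Further, if $f : D \to D'$ is a morphism of NS-family algebras from $(D, \{ \prec_\alpha, \succ_\alpha, \curlyvee_{\alpha, \beta} \})$ to $(D', \{ \prec'_\alpha, \succ'_\alpha, \curlyvee'_{\alpha, \beta} \})$, then the linear map $F : D \otimes \mathbf{k}\Omega \to D' \otimes \mathbf{k}\Omega$, $F(x \otimes \alpha) = f(x) \otimes \alpha$, is a morphism between the induced NS-algebras (i.e. it preserves $\prec,\succ,\curlyvee$).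
   Context: $\mathbf{k}$ is a field of characteristic $0$, $\Omega$ a semigroup and $\mathbf{k}\Omega$ its semigroup algebra (vector space with basis $\Omega$). An NS-algebra is a vector space $D$ with bilinear maps $\prec,\succ,\curlyvee: D\otimes D\to D$ such that for all $x,y,z$: $(x \prec y) \prec z = x \prec ( y \prec z + y \succ z + y \curlyvee z)$; $(x \succ y) \prec z = x \succ (y \prec z)$; $(x \prec y + x \succ y + x \curlyvee y) \succ z = x \succ (y \succ z)$; $( x \prec y + x \succ y + x \curlyvee y ) \curlyvee z + (x \curlyvee y) \prec z = x \succ (y \curlyvee z) + x \curlyvee ( y \prec z + y \succ z + y \curlyvee z )$. An NS-family algebra is a vector space $D$ with bilinear maps $\{ \prec_\alpha, \succ_\alpha, \curlyvee_{\alpha, \beta} : D \otimes D \to D \}_{\alpha, \beta \in \Omega}$ such that for all $x,y,z\in D$, $\alpha,\beta,\gamma\in\Omega$: (1) $(x \prec_\alpha y) \prec_\beta z = x \prec_{\alpha \beta} ( y \prec_\beta z + y \succ_\alpha z + y \curlyvee_{\alpha, \beta} z)$; (2) $(x \succ_\alpha y) \prec_\beta z = x \succ_\alpha (y \prec_\beta z)$; (3) $(x \prec_\beta y + x \succ_\alpha y + x \curlyvee_{\alpha, \beta} y) \succ_{\alpha \beta} z = x \succ_\alpha (y \succ_\beta z)$; (4) $( x \prec_\beta y + x \succ_\alpha y + x \curlyvee_{\alpha, \beta} y ) \curlyvee_{\alpha \beta, \gamma} z + (x \curlyvee_{\alpha, \beta} y) \prec_\gamma z = x \succ_\alpha (y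 \curlyvee_{\beta, \gamma} z) + x \curlyvee_{\alpha, \beta \gamma} ( y \prec_\gamma z + y \succ_\beta z + y \curlyvee_{\beta, \gamma} z )$. A morphism of NS-family algebras is a linear map $f$ with $f(x\prec_\alpha y)=f(x)\prec'_\alpha f(y)$, $f(x\succ_\alpha y)=f(x)\succ'_\alpha f(y)$, $f(x\curlyvee_{\alpha,\beta} y)=f(x)\curlyvee'_{\alpha,\beta} f(y)$ for all $x,y,\alpha,\beta$. *)

theory Defs
  imports "HOL-Analysis.Analysis" "HOL-Library.Poly_Mapping"
begin

definition bilinear_map :: "('k::field \<Rightarrow> 'd::ab_group_add \<Rightarrow> 'd) \<Rightarrow> ('d \<Rightarrow> 'd \<Rightarrow> 'd) \<Rightarrow> bool" where
  "bilinear_map s op \<longleftrightarrow>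
     (\<forall>x. Vector_Spaces.linear s s (op x)) \<and> (\<forall>y. Vector_Spaces.linear s s (\<lambda>x. op x y))"

text \<open>NS-algebra: L = prec, R = succ, V = curlyvee.\<close>
definition NS_algebra ::
  "('k::field \<Rightarrow> 'd::ab_group_add \<Rightarrow> 'd) \<Rightarrow> ('d \<Rightarrow> 'd \<Rightarrow> 'd) \<Rightarrow> ('d \<Rightarrow> 'd \<Rightarrow> 'd) \<Rightarrow> ('d \<Rightarrow> 'd \<Rightarrow> 'd) \<Rightarrow> bool" where
  "NS_algebra s L R V \<longleftrightarrow>
     vector_space s \<and> bilinear_map s L \<and> bilinear_map s R \<and> bilinear_map s V \<and>
     (\<forall>x y z. L (L x y) z = L x (L y z + R y z + V y z)) \<and>
     (\<forall>x y z. L (R x y) z = R x (L y z)) \<and>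
     (\<forall>x y z. R (L x y + R x y + V x y) z = R x (R y z)) \<and>
     (\<forall>x y z. V (L x y + R x y + V x y) z + L (V x y) z
              = R x (V y z) + V x (L y z + R y z + V y z))"

text \<open>NS-family algebra: L a x y = x prec_a y, R a x y = x succ_a y,
  V a b x y = x curlyvee_{a,b} y.\<close>
definition NS_family_algebra ::
  "('k::field \<Rightarrow> 'd::ab_group_add \<Rightarrow> 'd) \<Rightarrow> ('o::semigroup_mult \<Rightarrow> 'd \<Rightarrow> 'd \<Rightarrow> 'd)
    \<Rightarrow> ('o \<Rightarrow> 'd \<Rightarrow> 'd \<Rightarrow> 'd) \<Rightarrow> ('o \<Rightarrow> 'o \<Rightarrow> 'd \<Rightarrow> 'd \<Rightarrow> 'd) \<Rightarrow> bool" where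
  "NS_family_algebra s L R V \<longleftrightarrow>
     vector_space s \<and>
     (\<forall>a. bilinear_map s (L a)) \<and> (\<forall>a. bilinear_map s (R a)) \<and> (\<forall>a b. bilinear_map s (V a b)) \<and>
     (\<forall>x y z a b. L b (L a x y) z = L (a * b) x (L b y z + R a y z + V a b y z)) \<and>
     (\<forall>x y z a b. L b (R a x y) z = R a x (L b y z)) \<and>
     (\<forall>x y z a b. R (a * b) (L b x y + R a x y + V a b x y) z = R a x (R b y z)) \<and>
     (\<forall>x y z a b c. V (a * b) c (L b x y + R a x y + V a b x y) z + L c (V a b x y) z
                     = R a x (V b c y z) + V a (b * c) x (L c y z + R b y z + V b c y z))"

definition NS_family_morphism ::
  "('k::field \<Rightarrow> 'd::ab_group_add \<Rightarrow> 'd) \<Rightarrow> ('k \<Rightarrow> 'e::ab_group_add \<Rightarrow> 'e) \<Rightarrow> ('d \<Rightarrow> 'e)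
    \<Rightarrow> ('o::semigroup_mult \<Rightarrow> 'd \<Rightarrow> 'd \<Rightarrow> 'd) \<Rightarrow> ('o \<Rightarrow> 'd \<Rightarrow> 'd \<Rightarrow> 'd) \<Rightarrow> ('o \<Rightarrow> 'o \<Rightarrow> 'd \<Rightarrow> 'd \<Rightarrow> 'd)
    \<Rightarrow> ('o \<Rightarrow> 'e \<Rightarrow> 'e \<Rightarrow> 'e) \<Rightarrow> ('o \<Rightarrow> 'e \<Rightarrow> 'e \<Rightarrow> 'e) \<Rightarrow> ('o \<Rightarrow> 'o \<Rightarrow> 'e \<Rightarrow> 'e \<Rightarrow> 'e) \<Rightarrow> bool" where
  "NS_family_morphism s s' f L R V L' R' V' \<longleftrightarrow>
     Vector_Spaces.linear s s' f \<and>
     (\<forall>x y a. f (L a x y) = L' a (f x) (f y)) \<and>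
     (\<forall>x y a. f (R a x y) = R' a (f x) (f y)) \<and>
     (\<forall>x y a b. f (V a b x y) = V' a b (f x) (f y))"

definition NS_morphism ::
  "('k::field \<Rightarrow> 'd::ab_group_add \<Rightarrow> 'd) \<Rightarrow> ('k \<Rightarrow> 'e::ab_group_add \<Rightarrow> 'e) \<Rightarrow> ('d \<Rightarrow> 'e)
    \<Rightarrow> ('d \<Rightarrow> 'd \<Rightarrow> 'd) \<Rightarrow> ('d \<Rightarrow> 'd \<Rightarrow> 'd) \<Rightarrow> ('d \<Rightarrow> 'd \<Rightarrow> 'd)
    \<Rightarrow> ('e \<Rightarrow> 'e \<Rightarrow> 'e) \<Rightarrow> ('e \<Rightarrow> 'e \<Rightarrow> 'e) \<Rightarrow> ('e \<Rightarrow> 'e \<Rightarrow> 'e) \<Rightarrow> bool" where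
  "NS_morphism s s' f L R V L' R' V' \<longleftrightarrow>
     Vector_Spaces.linear s s' f \<and>
     (\<forall>x y. f (L x y) = L' (f x) (f y)) \<and>
     (\<forall>x y. f (R x y) = R' (f x) (f y)) \<and>
     (\<forall>x y. f (V x y) = V' (f x) (f y))"

text \<open>D \<otimes> k\<Omega> is modelled as the finitely supported functions from Omega to D (type o =>0 d);
  the pure tensor x \<otimes> \<alpha> is Poly_Mapping.single \<alpha> x.\<close>

definition tscale :: "('k \<Rightarrow> 'd::zero \<Rightarrow> 'd) \<Rightarrow> 'k \<Rightarrow> ('o \<Rightarrow>\<^sub>0 'd) \<Rightarrow> ('o \<Rightarrow>\<^sub>0 'd)" where
  "tscale s c u = Poly_Mapping.map (s c) u"

text \<open>Bilinear extension of (x \<otimes> a) op (y \<otimes> b) = (P a b x y) \<otimes> ab.\<close>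
definition tens_op :: "('o::semigroup_mult \<Rightarrow> 'o \<Rightarrow> 'd \<Rightarrow> 'd \<Rightarrow> 'd::comm_monoid_add)
    \<Rightarrow> ('o \<Rightarrow>\<^sub>0 'd) \<Rightarrow> ('o \<Rightarrow>\<^sub>0 'd) \<Rightarrow> ('o \<Rightarrow>\<^sub>0 'd)" where
  "tens_op P u v = (\<Sum>a\<in>Poly_Mapping.keys u. \<Sum>b\<in>Poly_Mapping.keys v. Poly_Mapping.single (a * b) (P a b (Poly_Mapping.lookup u a) (Poly_Mapping.lookup v b)))"

definition tens_prec :: "('o::semigroup_mult \<Rightarrow> 'd \<Rightarrow> 'd \<Rightarrow> 'd::comm_monoid_add) \<Rightarrow> ('o \<Rightarrow>\<^sub>0 'd) \<Rightarrow> ('o \<Rightarrow>\<^sub>0 'd) \<Rightarrow> ('o \<Rightarrow>\<^sub>0 'd)" where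
  "tens_prec L = tens_op (\<lambda>a b x y. L b x y)"

definition tens_succ :: "('o::semigroup_mult \<Rightarrow> 'd \<Rightarrow> 'd \<Rightarrow> 'd::comm_monoid_add) \<Rightarrow> ('o \<Rightarrow>\<^sub>0 'd) \<Rightarrow> ('o \<Rightarrow>\<^sub>0 'd) \<Rightarrow> ('o \<Rightarrow>\<^sub>0 'd)" where
  "tens_succ R = tens_op (\<lambda>a b x y. R a x y)"

definition tens_vee :: "('o::semigroup_mult \<Rightarrow> 'o \<Rightarrow> 'd \<Rightarrow> 'd \<Rightarrow> 'd::comm_monoid_add) \<Rightarrow> ('o \<Rightarrow>\<^sub>0 'd) \<Rightarrow> ('o \<Rightarrow>\<^sub>0 'd) \<Rightarrow> ('o \<Rightarrow>\<^sub>0 'd)" where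
  "tens_vee V = tens_op V"

definition tens_map :: "('d::zero \<Rightarrow> 'e::zero) \<Rightarrow> ('o \<Rightarrow>\<^sub>0 'd) \<Rightarrow> ('o \<Rightarrow>\<^sub>0 'e)" where
  "tens_map f u = Poly_Mapping.map f u"

end

theory Submission
  imports Defs
begin

lemma lookup_map0: "g 0 = 0 \<Longrightarrow> Poly_Mapping.lookup (Poly_Mapping.map g p) k = g (Poly_Mapping.lookup p k)"
  by transfer (auto simp: when_def)
lemma keys_map_sub: "Poly_Mapping.keys (Poly_Mapping.map g p) \<subseteq> Poly_Mapping.keys p"
  by transfer (auto simp: when_def)

lemma addhom_zero:
  fixes g :: "'a::ab_group_add \<Rightarrow> 'b::ab_group_add"
  assumes "\<And>x y. g (x + y) = g x + g y" shows "g 0 = 0"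
proof -
  have "g 0 = g 0 + g 0" using assms[of 0 0] by simp
  then show ?thesis by simp
qed

lemma map_add0:
  assumes "g 0 = 0" "\<And>x y. g (x + y) = g x + g y"
  shows "Poly_Mapping.map g (p + q) = Poly_Mapping.map g p + Poly_Mapping.map g q"
  by (rule poly_mapping_eqI) (simp add: lookup_map0 assms lookup_add)

lemma map_sum0:
  assumes "g 0 = 0" "\<And>x y. g (x + y) = g x + g y"
  shows "Poly_Mapping.map g (sum F S) = (\<Sum>i\<in>S. Poly_Mapping.map g (F i))"
proof (rule poly_mapping_eqI)
  fix k
  show "Poly_Mapping.lookup (Poly_Mapping.map g (sum F S)) k =
        Poly_Mapping.lookup (\<Sum>i\<in>S. Poly_Mapping.map g (F i)) k"
    using sum_comp_morphism[of g "\<lambda>i. Poly_Mapping.lookup (F i) k" S, OF assms]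
    by (simp add: lookup_map0 assms lookup_sum o_def)
qed

definition biadd :: "('o \<Rightarrow> 'o \<Rightarrow> 'd \<Rightarrow> 'd \<Rightarrow> 'd::ab_group_add) \<Rightarrow> bool" where
  "biadd P \<longleftrightarrow> (\<forall>a b x y z. P a b (x + y) z = P a b x z + P a b y z) \<and>
                (\<forall>a b x y z. P a b x (y + z) = P a b x y + P a b x z)"

lemma biadd_zero:
  assumes "biadd P" shows "P a b 0 y = 0" "P a b x 0 = 0"
  using assms unfolding biadd_def
  by (metis add_0 add_left_imp_eq add_0_right)+

lemma tens_op_ext:
  assumes P: "biadd P" and A: "finite A" "Poly_Mapping.keys u \<subseteq> A"
    and B: "finite B" "Poly_Mapping.keys v \<subseteq> B"
  shows "tens_op P u v = (\<Sum>a\<in>A. \<Sum>b\<in>B. Poly_Mapping.single (a * b)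
            (P a b (Poly_Mapping.lookup u a) (Poly_Mapping.lookup v b)))"
proof -
  have "(\<Sum>a\<in>A. \<Sum>b\<in>B. Poly_Mapping.single (a * b)
            (P a b (Poly_Mapping.lookup u a) (Poly_Mapping.lookup v b)))
      = (\<Sum>a\<in>Poly_Mapping.keys u. \<Sum>b\<in>B. Poly_Mapping.single (a * b)
            (P a b (Poly_Mapping.lookup u a) (Poly_Mapping.lookup v b)))"
    by (rule sum.mono_neutral_right[OF A(1) A(2)])
       (auto simp: biadd_zero[OF P] not_in_keys_iff_lookup_eq_zero)
  also have "\<dots> = (\<Sum>a\<in>Poly_Mapping.keys u. \<Sum>b\<in>Poly_Mapping.keys v. Poly_Mapping.single (a * b)
            (P a b (Poly_Mapping.lookup u a) (Poly_Mapping.lookup v b)))"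
    by (rule sum.cong[OF refl], rule sum.mono_neutral_right[OF B(1) B(2)])
       (auto simp: biadd_zero[OF P] not_in_keys_iff_lookup_eq_zero)
  finally show ?thesis unfolding tens_op_def by simp
qed

lemma tens_op_add_left:
  assumes P: "biadd P"
  shows "tens_op P (u1 + u2) v = tens_op P u1 v + tens_op P u2 v"
proof -
  let ?A = "Poly_Mapping.keys u1 \<union> Poly_Mapping.keys u2"
  have k: "Poly_Mapping.keys (u1 + u2) \<subseteq> ?A" by (rule keys_add)
  have e: "tens_op P u v = (\<Sum>a\<in>?A. \<Sum>b\<in>Poly_Mapping.keys v. Poly_Mapping.single (a * b)
            (P a b (Poly_Mapping.lookup u a) (Poly_Mapping.lookup v b)))"
    if "Poly_Mapping.keys u \<subseteq> ?A" for u
    by (rule tens_op_ext[OF P]) (use that in auto)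
  have ad: "P a b (x + y) z = P a b x z + P a b y z" for a b x y z
    using P unfolding biadd_def by blast
  show ?thesis
    by (subst (1 2 3) e) (use k in \<open>auto simp: lookup_add single_add sum.distrib ad\<close>)
qed

lemma tens_op_add_right:
  assumes P: "biadd P"
  shows "tens_op P u (v1 + v2) = tens_op P u v1 + tens_op P u v2"
proof -
  let ?B = "Poly_Mapping.keys v1 \<union> Poly_Mapping.keys v2"
  have k: "Poly_Mapping.keys (v1 + v2) \<subseteq> ?B" by (rule keys_add)
  have e: "tens_op P u v = (\<Sum>a\<in>Poly_Mapping.keys u. \<Sum>b\<in>?B. Poly_Mapping.single (a * b)
            (P a b (Poly_Mapping.lookup u a) (Poly_Mapping.lookup v b)))"
    if "Poly_Mapping.keys v \<subseteq> ?B" for v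
    by (rule tens_op_ext[OF P]) (use that in auto)
  have ad: "P a b x (y + z) = P a b x y + P a b x z" for a b x y z
    using P unfolding biadd_def by blast
  show ?thesis
    by (subst (1 2 3) e) (use k in \<open>auto simp: lookup_add single_add sum.distrib ad\<close>)
qed

lemma tens_op_zero_left: "tens_op P 0 v = 0"
  by (simp add: tens_op_def)
lemma tens_op_zero_right: "tens_op P u 0 = 0"
  by (simp add: tens_op_def)

lemma tens_op_sum_left:
  assumes P: "biadd P" and S: "finite S"
  shows "tens_op P (sum F S) w = (\<Sum>i\<in>S. tens_op P (F i) w)"
  using S by induction (simp_all add: tens_op_zero_left tens_op_add_left[OF P])

lemma tens_op_sum_right:
  assumes P: "biadd P" and S: "finite S"
  shows "tens_op P w (sum F S) = (\<Sum>i\<in>S. tens_op P w (F i))"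
  using S by induction (simp_all add: tens_op_zero_right tens_op_add_right[OF P])

lemma tens_op_single_left:
  assumes P: "biadd P"
  shows "tens_op P (Poly_Mapping.single a x) w =
     (\<Sum>c\<in>Poly_Mapping.keys w. Poly_Mapping.single (a * c) (P a c x (Poly_Mapping.lookup w c)))"
  by (subst tens_op_ext[OF P, where A = "{a}" and B = "Poly_Mapping.keys w"]) auto

lemma tens_op_single_right:
  assumes P: "biadd P"
  shows "tens_op P u (Poly_Mapping.single b y) =
     (\<Sum>a\<in>Poly_Mapping.keys u. Poly_Mapping.single (a * b) (P a b (Poly_Mapping.lookup u a) y))"
  by (subst tens_op_ext[OF P, where B = "{b}" and A = "Poly_Mapping.keys u"]) auto

definition T3 where
  "T3 u v w g = (\<Sum>a\<in>Poly_Mapping.keys u. \<Sum>b\<in>Poly_Mapping.keys v. \<Sum>c\<in>Poly_Mapping.keys w.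
      Poly_Mapping.single (a * b * c) (g a b c))"

lemma T3_add: "T3 u v w g + T3 u v w h = T3 u v w (\<lambda>a b c. g a b c + h a b c)"
  by (simp add: T3_def sum.distrib single_add)

lemma T3_cong: "(\<And>a b c. g a b c = h a b c) \<Longrightarrow> T3 u v w g = T3 u v w h"
  by (simp add: T3_def)

lemma nest_left:
  assumes P: "biadd P" and Q: "biadd Q"
  shows "tens_op P (tens_op Q u v) w = T3 u v w (\<lambda>a b c. P (a * b) c
     (Q a b (Poly_Mapping.lookup u a) (Poly_Mapping.lookup v b)) (Poly_Mapping.lookup w c))"
  unfolding tens_op_def[of Q] T3_def
  by (simp add: tens_op_sum_left[OF P] tens_op_single_left[OF P])

lemma nest_right:
  assumes P: "biadd P" and Q: "biadd Q"
  shows "tens_op P u (tens_op Q v w) = T3 u v w (\<lambda>a b c. P a (b * c)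
     (Poly_Mapping.lookup u a) (Q b c (Poly_Mapping.lookup v b) (Poly_Mapping.lookup w c)))"
  unfolding tens_op_def[of Q] T3_def
  apply (simp add: tens_op_sum_right[OF P] tens_op_single_right[OF P] mult.assoc)
  apply (rule trans[OF sum.cong[OF refl sum.swap]])
  apply (rule sum.swap)
  done

lemma vs_facts:
  assumes "vector_space s"
  shows "s c (x + y) = s c x + s c y" "s c 0 = 0"
  using assms unfolding vector_space_def
  by (auto intro: addhom_zero)

lemma vs_tscale:
  assumes vs: "vector_space s"
  shows "vector_space (tscale s)"
proof -
  have z: "s c 0 = 0" for c by (rule vs_facts(2)[OF vs])
  show ?thesis
    using vs unfolding vector_space_def tscale_def
    by (auto intro!: poly_mapping_eqI simp: lookup_map0 z lookup_add)
qed

lemma tens_op_scale_right: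
  assumes P: "biadd P" and vs: "vector_space s"
    and sc: "\<And>a b x y c. P a b x (s c y) = s c (P a b x y)"
  shows "tens_op P u (tscale s c v) = tscale s c (tens_op P u v)"
proof -
  have z: "s c 0 = 0" and ad: "\<And>x y. s c (x + y) = s c x + s c y" using vs_facts[OF vs] by auto
  have "tens_op P u (tscale s c v) = (\<Sum>a\<in>Poly_Mapping.keys u. \<Sum>b\<in>Poly_Mapping.keys v. Poly_Mapping.single (a * b)
            (P a b (Poly_Mapping.lookup u a) (Poly_Mapping.lookup (tscale s c v) b)))"
    by (rule tens_op_ext[OF P]) (auto simp: tscale_def intro: keys_map_sub[THEN subsetD])
  also have "\<dots> = tscale s c (tens_op P u v)"
    by (simp add: tscale_def tens_op_def map_sum0 z ad lookup_map0 sc)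
  finally show ?thesis .
qed

lemma tens_op_scale_left:
  assumes P: "biadd P" and vs: "vector_space s"
    and sc: "\<And>a b x y c. P a b (s c x) y = s c (P a b x y)"
  shows "tens_op P (tscale s c u) v = tscale s c (tens_op P u v)"
proof -
  have z: "s c 0 = 0" and ad: "\<And>x y. s c (x + y) = s c x + s c y" using vs_facts[OF vs] by auto
  have "tens_op P (tscale s c u) v = (\<Sum>a\<in>Poly_Mapping.keys u. \<Sum>b\<in>Poly_Mapping.keys v. Poly_Mapping.single (a * b)
            (P a b (Poly_Mapping.lookup (tscale s c u) a) (Poly_Mapping.lookup v b)))"
    by (rule tens_op_ext[OF P]) (auto simp: tscale_def intro: keys_map_sub[THEN subsetD])
  also have "\<dots> = tscale s c (tens_op P u v)"
    by (simp add: tscale_def tens_op_def map_sum0 z ad lookup_map0 sc)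
  finally show ?thesis .
qed

lemma bilinear_tens_op:
  assumes P: "biadd P" and vs: "vector_space s"
    and sc1: "\<And>a b x y c. P a b (s c x) y = s c (P a b x y)"
    and sc2: "\<And>a b x y c. P a b x (s c y) = s c (P a b x y)"
  shows "bilinear_map (tscale s) (tens_op P)"
  unfolding bilinear_map_def Vector_Spaces.linear_iff
  using vs_tscale[OF vs] tens_op_add_left[OF P] tens_op_add_right[OF P]
    tens_op_scale_left[OF P vs sc1] tens_op_scale_right[OF P vs sc2]
  by auto

lemma tens_map_op:
  assumes P': "biadd P'" and f0: "f 0 = 0" and fa: "\<And>x y. f (x + y) = f x + f y"
    and hom: "\<And>a b x y. f (P a b x y) = P' a b (f x) (f y)"
  shows "tens_map f (tens_op P u v) = tens_op P' (tens_map f u) (tens_map f v)"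
proof -
  have "tens_op P' (tens_map f u) (tens_map f v) = (\<Sum>a\<in>Poly_Mapping.keys u. \<Sum>b\<in>Poly_Mapping.keys v. Poly_Mapping.single (a * b)
            (P' a b (Poly_Mapping.lookup (tens_map f u) a) (Poly_Mapping.lookup (tens_map f v) b)))"
    by (rule tens_op_ext[OF P']) (auto simp: tens_map_def intro: keys_map_sub[THEN subsetD])
  also have "\<dots> = tens_map f (tens_op P u v)"
    by (simp add: tens_map_def tens_op_def map_sum0 f0 fa lookup_map0 hom)
  finally show ?thesis by simp
qed

lemma bilin_facts:
  assumes "bilinear_map s op"
  shows "op (x + y) z = op x z + op y z" "op x (y + z) = op x y + op x z"
    "op (s c x) y = s c (op x y)" "op x (s c y) = s c (op x y)"
  using assms unfolding bilinear_map_def Vector_Spaces.linear_iff by auto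

theorem theorem3p13:
  fixes s :: "'k::field_char_0 \<Rightarrow> 'd::ab_group_add \<Rightarrow> 'd"
    and s' :: "'k \<Rightarrow> 'e::ab_group_add \<Rightarrow> 'e"
    and L R :: "'o::semigroup_mult \<Rightarrow> 'd \<Rightarrow> 'd \<Rightarrow> 'd" and V :: "'o \<Rightarrow> 'o \<Rightarrow> 'd \<Rightarrow> 'd \<Rightarrow> 'd"
    and L' R' :: "'o \<Rightarrow> 'e \<Rightarrow> 'e \<Rightarrow> 'e" and V' :: "'o \<Rightarrow> 'o \<Rightarrow> 'e \<Rightarrow> 'e \<Rightarrow> 'e"
    and f :: "'d \<Rightarrow> 'e"
  assumes "NS_family_algebra s L R V"
  shows "NS_algebra (tscale s) (tens_prec L) (tens_succ R) (tens_vee V) \<and>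
         (NS_family_algebra s' L' R' V' \<longrightarrow> NS_family_morphism s s' f L R V L' R' V' \<longrightarrow>
          NS_morphism (tscale s) (tscale s') (tens_map f)
            (tens_prec L) (tens_succ R) (tens_vee V) (tens_prec L') (tens_succ R') (tens_vee V'))"
proof -
  note A = assms[unfolded NS_family_algebra_def]
  have vs: "vector_space s" and bL: "\<And>a. bilinear_map s (L a)" and bR: "\<And>a. bilinear_map s (R a)"
    and bV: "\<And>a b. bilinear_map s (V a b)" using A by auto
  note C = A[THEN conjunct2, THEN conjunct2, THEN conjunct2, THEN conjunct2]
  have ax1: "\<And>x y z a b. L b (L a x y) z = L (a * b) x (L b y z + R a y z + V a b y z)"
    by (rule C[THEN conjunct1, rule_format])
  have ax2: "\<And>x y z a b. L b (R a x y) z = R a x (L b y z)"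
    by (rule C[THEN conjunct2, THEN conjunct1, rule_format])
  have ax3: "\<And>x y z a b. R (a * b) (L b x y + R a x y + V a b x y) z = R a x (R b y z)"
    by (rule C[THEN conjunct2, THEN conjunct2, THEN conjunct1, rule_format])
  have ax4: "\<And>x y z a b c. V (a * b) c (L b x y + R a x y + V a b x y) z + L c (V a b x y) z
                     = R a x (V b c y z) + V a (b * c) x (L c y z + R b y z + V b c y z)"
    by (rule C[THEN conjunct2, THEN conjunct2, THEN conjunct2, rule_format])
  note Lf = bilin_facts[OF bL] and Rf = bilin_facts[OF bR] and Vf = bilin_facts[OF bV]
  have pL: "biadd (\<lambda>a b x y. L b x y)" and pR: "biadd (\<lambda>a b x y. R a x y)" and pV: "biadd V"
    unfolding biadd_def using Lf Rf Vf by auto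
  have NS: "NS_algebra (tscale s) (tens_prec L) (tens_succ R) (tens_vee V)"
    unfolding NS_algebra_def tens_prec_def tens_succ_def tens_vee_def
  proof (intro conjI allI)
    show "vector_space (tscale s)" by (rule vs_tscale[OF vs])
    show "bilinear_map (tscale s) (tens_op (\<lambda>a b. L b))"
      by (rule bilinear_tens_op[OF pL vs]) (simp_all add: Lf)
    show "bilinear_map (tscale s) (tens_op (\<lambda>a b. R a))"
      by (rule bilinear_tens_op[OF pR vs]) (simp_all add: Rf)
    show "bilinear_map (tscale s) (tens_op V)"
      by (rule bilinear_tens_op[OF pV vs]) (simp_all add: Vf)
  next
    fix x y z
    show "tens_op (\<lambda>a b. L b) (tens_op (\<lambda>a b. L b) x y) z =
      tens_op (\<lambda>a b. L b) x (tens_op (\<lambda>a b. L b) y z + tens_op (\<lambda>a b. R a) y z + tens_op V y z)"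
      apply (simp only: nest_left nest_right tens_op_add_left tens_op_add_right pL pR pV T3_add)
      apply (rule T3_cong)
      apply (simp add: ax1 Lf)
      done
  next
    fix x y z
    show "tens_op (\<lambda>a b. L b) (tens_op (\<lambda>a b. R a) x y) z =
      tens_op (\<lambda>a b. R a) x (tens_op (\<lambda>a b. L b) y z)"
      apply (simp only: nest_left nest_right tens_op_add_left tens_op_add_right pL pR pV T3_add)
      apply (rule T3_cong)
      apply (simp add: ax2)
      done
  next
    fix x y z
    show "tens_op (\<lambda>a b. R a) (tens_op (\<lambda>a b. L b) x y + tens_op (\<lambda>a b. R a) x y + tens_op V x y) z =
      tens_op (\<lambda>a b. R a) x (tens_op (\<lambda>a b. R a) y z)"
      apply (simp only: nest_left nest_right tens_op_add_left tens_op_add_right pL pR pV T3_add)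
      apply (rule T3_cong)
      subgoal for a b c
        using ax3[where x="Poly_Mapping.lookup x a" and y="Poly_Mapping.lookup y b" and z="Poly_Mapping.lookup z c" and a=a and b=b]
        by (simp add: Rf)
      done
  next
    fix x y z
    show "tens_op V (tens_op (\<lambda>a b. L b) x y + tens_op (\<lambda>a b. R a) x y + tens_op V x y) z +
        tens_op (\<lambda>a b. L b) (tens_op V x y) z =
      tens_op (\<lambda>a b. R a) x (tens_op V y z) +
        tens_op V x (tens_op (\<lambda>a b. L b) y z + tens_op (\<lambda>a b. R a) y z + tens_op V y z)"
      apply (simp only: nest_left nest_right tens_op_add_left tens_op_add_right pL pR pV T3_add)
      apply (rule T3_cong)
      subgoal for a b c
        using ax4[where x="Poly_Mapping.lookup x a" and y="Poly_Mapping.lookup y b" and z="Poly_Mapping.lookup z c" and a=a and b=b and c=c]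
        by (simp add: Vf Lf add.assoc)
      done
  qed
  show ?thesis
  proof (intro conjI impI NS)
    assume A': "NS_family_algebra s' L' R' V'" and M: "NS_family_morphism s s' f L R V L' R' V'"
    note A2 = A'[unfolded NS_family_algebra_def]
    have vs': "vector_space s'" and bL': "\<And>a. bilinear_map s' (L' a)" and bR': "\<And>a. bilinear_map s' (R' a)"
      and bV': "\<And>a b. bilinear_map s' (V' a b)" using A2 by auto
    note Lf' = bilin_facts[OF bL'] and Rf' = bilin_facts[OF bR'] and Vf' = bilin_facts[OF bV']
    have pL': "biadd (\<lambda>a b x y. L' b x y)" and pR': "biadd (\<lambda>a b x y. R' a x y)" and pV': "biadd V'"
      unfolding biadd_def using Lf' Rf' Vf' by auto
    note M2 = M[unfolded NS_family_morphism_def]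
    have lin: "Vector_Spaces.linear s s' f" using M2 by blast
    have fa: "\<And>x y. f (x + y) = f x + f y" and fs: "\<And>c x. f (s c x) = s' c (f x)"
      using lin unfolding Vector_Spaces.linear_iff by auto
    have f0: "f 0 = 0" by (rule addhom_zero[OF fa])
    have hL: "\<And>x y a. f (L a x y) = L' a (f x) (f y)" and hR: "\<And>x y a. f (R a x y) = R' a (f x) (f y)"
      and hV: "\<And>x y a b. f (V a b x y) = V' a b (f x) (f y)" using M2 by auto
    have z: "\<And>c. s c 0 = 0" using vs_facts(2)[OF vs] .
    have z': "\<And>c. s' c 0 = 0" using vs_facts(2)[OF vs'] .
    show "NS_morphism (tscale s) (tscale s') (tens_map f)
            (tens_prec L) (tens_succ R) (tens_vee V) (tens_prec L') (tens_succ R') (tens_vee V')"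
      unfolding NS_morphism_def tens_prec_def tens_succ_def tens_vee_def
    proof (intro conjI allI)
      show "Vector_Spaces.linear (tscale s) (tscale s') (tens_map f)"
        unfolding Vector_Spaces.linear_iff
        using vs_tscale[OF vs] vs_tscale[OF vs']
        by (auto simp: tens_map_def tscale_def map_add0 f0 fa intro!: poly_mapping_eqI
            simp add: lookup_map0 z z' fs)
    qed (auto intro: tens_map_op[OF pL' f0 fa] tens_map_op[OF pR' f0 fa] tens_map_op[OF pV' f0 fa]
          simp: hL hR hV)
  qed
qed

end
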